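(* Fix $\varepsilon\in(0,1]$. For every $\lambda\in(\varepsilon,\infty)$ with $(\lambda-\varepsilon)N>\lambda\varepsilon$, every $u\in(0,1)$ and every $m\in\mathbb N$, \[ \left|\frac{\lambda N^2}{2u(1-u)(N+\lambda)}\sum_{n=mN+1}^\infty\Big(\frac N{N+\lambda}\Big)^n\Big(\frac1NS_{\beta_u}\big(L_0^{n+1}(J)\big)-\frac1NS_{\beta_u}\big(L_0^n(J)\big)\Big)\right| \le\left[\Big(1+\frac\lambda N\Big)\Big(1-\frac\varepsilon N\Big)\right]^{-(mN+1)}\frac{C_\varepsilon\,\lambda(N-\varepsilon)}{(\lambda-\varepsilon)N-\lambda\varepsilon}, \] where $C_\varepsilon=\frac1\pi\left(2\varepsilon^{-1}+9+\pi+\frac{32\sqrt2}{(1-\cos1)^{1/2}}\right)\frac{4+\varepsilon}{\varepsilon}$.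
   Context: $E$ is a finite set with $N=\#E>8$ elements, listed in a fixed order; $\mathsf M_E$ is the space of complex $N\times N$ matrices indexed by $E\times E$. $Q$ is an irreducible stochastic matrix on $E$ with $Q(x,y)=Q(y,x)$ for all $x,y$ and $\mathrm{tr}(Q)=0$. $I$ is the identity and $J$ the matrix with all entries $1/N$. $L_0(C)=\frac{N-2}NC+\frac1N(CQ+QC)-\frac{2\,\mathrm{tr}(C)}{N^2}Q+\frac{2\,\mathrm{tr}(C)}{N^2}I$, and $L_0^n$ is its $n$-fold composition. For $u\in(0,1)$, $\beta_u$ is a random vector in $\{0,1\}^E$ with i.i.d. Bernoulli($u$) entries and $S_{\beta_u}(C)=\mathbb E\big[\sum_{x,y}\beta_u(x)C(x,y)\beta_u(y)\big]$. *)

theory Defs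
  imports "HOL-Analysis.Analysis"
begin

type_synonym 'e cmat = "'e \<Rightarrow> 'e \<Rightarrow> complex"

definition mmult :: "('e::finite \<Rightarrow> 'e \<Rightarrow> 'a::comm_semiring_1) \<Rightarrow> ('e \<Rightarrow> 'e \<Rightarrow> 'a) \<Rightarrow> 'e \<Rightarrow> 'e \<Rightarrow> 'a" where
  "mmult A B = (\<lambda>x y. \<Sum>z\<in>UNIV. A x z * B z y)"

fun mpow :: "('e::finite \<Rightarrow> 'e \<Rightarrow> 'a::comm_semiring_1) \<Rightarrow> nat \<Rightarrow> 'e \<Rightarrow> 'e \<Rightarrow> 'a" where
  "mpow A 0 = (\<lambda>x y. if x = y then 1 else 0)"
| "mpow A (Suc n) = mmult (mpow A n) A"

definition mtrace :: "('e::finite \<Rightarrow> 'e \<Rightarrow> 'a::comm_semiring_1) \<Rightarrow> 'a" where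
  "mtrace A = (\<Sum>x\<in>UNIV. A x x)"

definition stochastic :: "('e::finite \<Rightarrow> 'e \<Rightarrow> real) \<Rightarrow> bool" where
  "stochastic Q \<longleftrightarrow> (\<forall>x y. Q x y \<ge> 0) \<and> (\<forall>x. (\<Sum>y\<in>UNIV. Q x y) = 1)"

definition irreducible_mat :: "('e::finite \<Rightarrow> 'e \<Rightarrow> real) \<Rightarrow> bool" where
  "irreducible_mat Q \<longleftrightarrow> (\<forall>x y. \<exists>n. mpow Q n x y > 0)"

definition idm :: "'e cmat" where "idm = (\<lambda>x y. if x = y then 1 else 0)"

definition Jm :: "'e::finite cmat" where "Jm = (\<lambda>x y. 1 / of_nat CARD('e))"

definition cQ :: "('e \<Rightarrow> 'e \<Rightarrow> real) \<Rightarrow> 'e cmat" where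
  "cQ Q = (\<lambda>x y. complex_of_real (Q x y))"

definition L0 :: "('e::finite \<Rightarrow> 'e \<Rightarrow> real) \<Rightarrow> 'e cmat \<Rightarrow> 'e cmat" where
  "L0 Q C = (let N = of_nat CARD('e) :: complex in
     (\<lambda>x y. (N - 2) / N * C x y + (1 / N) * (mmult C (cQ Q) x y + mmult (cQ Q) C x y)
            - 2 * mtrace C / N^2 * cQ Q x y + 2 * mtrace C / N^2 * idm x y))"

text \<open>S_{beta_u}(C) = E[sum_{x,y} beta(x) C(x,y) beta(y)], beta i.i.d. Bernoulli(u);
  the expectation written out over the support {0,1}^E, identifying beta with the
  set B of points where beta = 1.\<close>
definition S_beta :: "real \<Rightarrow> 'e::finite cmat \<Rightarrow> complex" where
  "S_beta u C = (\<Sum>B\<in>Pow (UNIV::'e set).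
      complex_of_real (u ^ card B * (1 - u) ^ (CARD('e) - card B)) *
      (\<Sum>x\<in>UNIV. \<Sum>y\<in>UNIV. (if x \<in> B then 1 else 0) * C x y * (if y \<in> B then 1 else 0)))"

definition C_eps :: "real \<Rightarrow> real" where
  "C_eps \<epsilon> = (1 / pi) * (2 / \<epsilon> + 9 + pi + 32 * sqrt 2 / sqrt (1 - cos 1)) * ((4 + \<epsilon>) / \<epsilon>)"

end

theory Submission
  imports Defs
begin


type_synonym 'e rm = "real^'e^'e"

lemma mat_add_rdistrib: "((A::('e::finite) rm) + B) ** C = A ** C + B ** C"
  by (vector matrix_matrix_mult_def sum.distrib field_simps)
lemma mat_sub_rdistrib: "((A::('e::finite) rm) - B) ** C = A ** C - B ** C"
  by (vector matrix_matrix_mult_def sum_subtractf field_simps)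
lemma mat_sub_ldistrib: "(A::('e::finite) rm) ** (B - C) = A ** B - A ** C"
  by (vector matrix_matrix_mult_def sum_subtractf field_simps)
lemma mat_scale_l: "((c::real) *\<^sub>R (A::('e::finite) rm)) ** B = c *\<^sub>R (A ** B)"
  by (simp add: scalar_matrix_assoc)
lemma mat_scale_r: "(A::('e::finite) rm) ** ((c::real) *\<^sub>R B) = c *\<^sub>R (A ** B)"
  by (simp add: matrix_scalar_ac scalar_matrix_assoc)
lemma trace_scale: "trace ((c::real) *\<^sub>R (A::('e::finite) rm)) = c * trace A"
  by (simp add: trace_def sum_distrib_left)
lemma mv_scale: "((c::real) *\<^sub>R (A::('e::finite) rm)) *v v = c *\<^sub>R (A *v v)"
  by (vector matrix_vector_mult_def sum_distrib_left mult.assoc)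

lemmas malg = mat_add_rdistrib mat_sub_rdistrib mat_sub_ldistrib matrix_add_ldistrib mat_scale_l mat_scale_r
  trace_add trace_sub trace_scale

definition qf :: "'e::finite rm \<Rightarrow> real^'e \<Rightarrow> real" where "qf B v = v \<bullet> (B *v v)"

lemma sym_dot: assumes "transpose (Q::('e::finite) rm) = Q" shows "v \<bullet> (Q *v w) = (Q *v v) \<bullet> w"
proof -
  have "v \<bullet> (Q *v w) = (v v* Q) \<bullet> w" by (simp add: dot_lmul_matrix)
  also have "v v* Q = transpose Q *v v" by simp
  finally show ?thesis using assms by simp
qed

context
  fixes Q :: "real^'e::finite^'e"
  assumes Qnn: "\<And>i j. Q$i$j \<ge> 0" and Qrow: "\<And>i. (\<Sum>j\<in>UNIV. Q$i$j) = 1"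
    and Qsym: "transpose Q = Q"
begin

lemma Qsym': "Q$i$j = Q$j$i"
  using Qsym by (metis transpose_def vec_lambda_beta)

lemma Qcol: "(\<Sum>i\<in>UNIV. Q$i$j) = 1"
  using Qrow[of j] by (simp add: Qsym')

lemma e1: "(\<Sum>i\<in>UNIV. \<Sum>j\<in>UNIV. Q$i$j * (v$i)^2) = v \<bullet> v"
proof -
  have "(\<Sum>i\<in>UNIV. \<Sum>j\<in>UNIV. Q$i$j * (v$i)^2) = (\<Sum>i\<in>UNIV. (\<Sum>j\<in>UNIV. Q$i$j) * (v$i)^2)"
    by (simp add: sum_distrib_right)
  also have "\<dots> = v \<bullet> v" by (simp add: Qrow inner_vec_def power2_eq_square)
  finally show ?thesis .
qed

lemma e2: "(\<Sum>i\<in>UNIV. \<Sum>j\<in>UNIV. Q$i$j * (v$j)^2) = v \<bullet> v"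
proof -
  have "(\<Sum>i\<in>UNIV. \<Sum>j\<in>UNIV. Q$i$j * (v$j)^2) = (\<Sum>j\<in>UNIV. \<Sum>i\<in>UNIV. Q$i$j * (v$j)^2)"
    by (rule sum.swap)
  also have "\<dots> = (\<Sum>j\<in>UNIV. (\<Sum>i\<in>UNIV. Q$i$j) * (v$j)^2)"
    by (simp add: sum_distrib_right)
  also have "\<dots> = v \<bullet> v" by (simp add: Qcol inner_vec_def power2_eq_square)
  finally show ?thesis .
qed

lemma e3: "(\<Sum>i\<in>UNIV. \<Sum>j\<in>UNIV. Q$i$j * (v$i * v$j)) = v \<bullet> (Q *v v)"
  by (simp add: inner_vec_def matrix_vector_mult_def sum_distrib_left mult_ac)

lemma Q1: "\<bar>v \<bullet> (Q *v v)\<bar> \<le> v \<bullet> v"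
proof -
  have p: "0 \<le> (\<Sum>i\<in>UNIV. \<Sum>j\<in>UNIV. Q$i$j * (v$i + v$j)^2)"
    by (intro sum_nonneg mult_nonneg_nonneg Qnn) auto
  have m: "0 \<le> (\<Sum>i\<in>UNIV. \<Sum>j\<in>UNIV. Q$i$j * (v$i - v$j)^2)"
    by (intro sum_nonneg mult_nonneg_nonneg Qnn) auto
  have "(\<Sum>i\<in>UNIV. \<Sum>j\<in>UNIV. Q$i$j * (v$i + v$j)^2) =
     (\<Sum>i\<in>UNIV. \<Sum>j\<in>UNIV. Q$i$j * (v$i)^2) + 2 * (\<Sum>i\<in>UNIV. \<Sum>j\<in>UNIV. Q$i$j * (v$i * v$j))
     + (\<Sum>i\<in>UNIV. \<Sum>j\<in>UNIV. Q$i$j * (v$j)^2)"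
    by (simp add: sum.distrib sum_distrib_left power2_eq_square algebra_simps)
  moreover have "(\<Sum>i\<in>UNIV. \<Sum>j\<in>UNIV. Q$i$j * (v$i - v$j)^2) =
     (\<Sum>i\<in>UNIV. \<Sum>j\<in>UNIV. Q$i$j * (v$i)^2) - 2 * (\<Sum>i\<in>UNIV. \<Sum>j\<in>UNIV. Q$i$j * (v$i * v$j))
     + (\<Sum>i\<in>UNIV. \<Sum>j\<in>UNIV. Q$i$j * (v$j)^2)"
    by (simp add: sum.distrib sum_subtractf sum_distrib_left power2_eq_square algebra_simps)
  ultimately show ?thesis using p m e1[of v] e2[of v] e3[of v] by linarith
qed

lemma Q2: "(Q *v v) \<bullet> (Q *v v) \<le> v \<bullet> v"
proof -
  have row: "((Q *v v)$i)^2 \<le> (\<Sum>j\<in>UNIV. Q$i$j * (v$j)^2)" for i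
  proof -
    define m where "m = (Q *v v)$i"
    have mdef: "m = (\<Sum>j\<in>UNIV. Q$i$j * v$j)" by (simp add: m_def matrix_vector_mult_def)
    have "0 \<le> (\<Sum>j\<in>UNIV. Q$i$j * (v$j - m)^2)"
      by (intro sum_nonneg mult_nonneg_nonneg Qnn) auto
    also have "\<dots> = (\<Sum>j\<in>UNIV. Q$i$j * (v$j)^2) - 2 * m * (\<Sum>j\<in>UNIV. Q$i$j * v$j) + m^2 * (\<Sum>j\<in>UNIV. Q$i$j)"
      by (simp add: sum.distrib sum_subtractf sum_distrib_left sum_distrib_right power2_eq_square algebra_simps)
    also have "\<dots> = (\<Sum>j\<in>UNIV. Q$i$j * (v$j)^2) - m^2"
      by (simp add: Qrow mdef[symmetric] power2_eq_square)
    finally show ?thesis by (simp add: m_def)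
  qed
  have "(Q *v v) \<bullet> (Q *v v) = (\<Sum>i\<in>UNIV. ((Q *v v)$i)^2)"
    by (simp add: inner_vec_def power2_eq_square)
  also have "\<dots> \<le> (\<Sum>i\<in>UNIV. \<Sum>j\<in>UNIV. Q$i$j * (v$j)^2)"
    by (rule sum_mono) (rule row)
  also have "\<dots> = v \<bullet> v" by (rule e2)
  finally show ?thesis .
qed

end


definition Jr :: "('e::finite) rm" where "Jr = (\<chi> i j. 1 / real CARD('e))"
definition Pm :: "('e::finite) rm" where "Pm = mat 1 - Jr"
definition Dm :: "('e::finite) rm \<Rightarrow> 'e rm" where "Dm Q = mat 1 - Q"
definition Rm :: "('e::finite) rm \<Rightarrow> 'e rm" where
  "Rm Q = ((real CARD('e) - 2) / real CARD('e)) *\<^sub>R mat 1 + (2 / real CARD('e)) *\<^sub>R Q"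
definition coneC :: "('e::finite) rm \<Rightarrow> 'e rm set" where
  "coneC Q = {B. B ** Q = Q ** B \<and> (\<forall>v. 0 \<le> v \<bullet> (B *v v)) \<and> (\<forall>v. 0 \<le> v \<bullet> ((Rm Q ** B) *v v))}"

lemma trace_sandwich:
  fixes B M :: "('e::finite) rm"
  assumes "\<forall>v. 0 \<le> v \<bullet> (B *v v)" and "transpose M = M"
  shows "0 \<le> trace (M ** B ** M)"
proof -
  have "(transpose M ** (B ** M))$i$i = column i M \<bullet> (B *v column i M)" for i
    by (simp add: matrix_matrix_mult_def transpose_def column_def inner_vec_def matrix_vector_mult_def
        sum_distrib_left mult_ac)
  then have "trace (transpose M ** (B ** M)) = (\<Sum>i\<in>UNIV. column i M \<bullet> (B *v column i M))"
    by (simp add: trace_def)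
  also have "\<dots> \<ge> 0" using assms(1) by (intro sum_nonneg) auto
  finally show ?thesis using assms(2) by (simp add: matrix_mul_assoc)
qed

context
  fixes Q :: "real^'e::finite^'e"
  assumes Qnn: "\<And>i j. Q$i$j \<ge> 0" and Qrow: "\<And>i. (\<Sum>j\<in>UNIV. Q$i$j) = 1"
    and Qsym: "transpose Q = Q" and N8: "8 < CARD('e)"
begin

lemma QJ: "Q ** Jr = Jr"
  by (simp add: Jr_def matrix_matrix_mult_def vec_eq_iff sum_divide_distrib[symmetric] Qrow)
lemma JQ: "Jr ** Q = Jr"
  by (simp add: Jr_def matrix_matrix_mult_def vec_eq_iff sum_divide_distrib[symmetric] Qcol[OF Qnn Qrow Qsym])
lemma JJ: "Jr ** Jr = (Jr :: 'e rm)"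
  by (simp add: Jr_def matrix_matrix_mult_def vec_eq_iff)
lemma trJ: "trace (Jr :: 'e rm) = 1"
  using N8 by (simp add: Jr_def trace_def)
lemma tJ: "transpose (Jr :: 'e rm) = Jr"
  by (simp add: Jr_def transpose_def)
lemma PQ: "Pm ** Q = Q ** Pm"
  by (simp add: Pm_def malg QJ JQ)
lemma PP: "Pm ** Pm = (Pm :: 'e rm)"
  by (simp add: Pm_def malg JJ)
lemma tP: "transpose (Pm :: 'e rm) = Pm"
  by (simp add: Pm_def Jr_def mat_def transpose_def vec_eq_iff)
lemma trP: "trace (Pm :: 'e rm) = real CARD('e) - 1"
  by (simp add: Pm_def trace_sub trJ trace_I)
lemma DP: "Dm Q ** Pm = Dm Q"
  by (simp add: Pm_def Dm_def malg QJ)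
lemma DJ: "Dm Q ** Jr = 0"
  by (simp add: Dm_def malg QJ)
lemma RQ: "Rm Q ** Q = Q ** Rm Q"
  by (simp add: Rm_def malg)
lemma Rcomm: "B ** Q = Q ** B \<Longrightarrow> Rm Q ** B = B ** Rm Q"
  by (simp add: Rm_def malg)
lemma DQ: "Dm Q ** Q = Q ** Dm Q"
  by (simp add: Dm_def malg)
lemma tR: "transpose (Rm Q) = Rm Q"
  by (simp add: Rm_def mat_def Qsym'[OF Qnn Qrow Qsym] transpose_def vec_eq_iff)

lemma R_dot: "v \<bullet> (Rm Q *v w) = ((real CARD('e) - 2) / real CARD('e)) * (v \<bullet> w)
   + (2 / real CARD('e)) * ((Q *v v) \<bullet> w)"
  by (simp add: Rm_def matrix_vector_mult_add_rdistrib mv_scale inner_add_right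
      sym_dot[OF Qsym])

lemma cone_R: assumes "B \<in> coneC Q" shows "Rm Q ** B \<in> coneC Q"
proof -
  from assms have c: "B ** Q = Q ** B" and p1: "\<forall>v. 0 \<le> v \<bullet> (B *v v)"
    and p2: "\<forall>v. 0 \<le> v \<bullet> ((Rm Q ** B) *v v)" by (auto simp: coneC_def)
  have "(Rm Q ** B) ** Q = Q ** (Rm Q ** B)"
    by (metis RQ c matrix_mul_assoc)
  moreover have "0 \<le> v \<bullet> ((Rm Q ** (Rm Q ** B)) *v v)" for v
  proof -
    have "v \<bullet> ((Rm Q ** (Rm Q ** B)) *v v) = v \<bullet> (Rm Q *v ((Rm Q ** B) *v v))"
      by (simp add: matrix_vector_mul_assoc)
    also have "\<dots> = (Rm Q *v v) \<bullet> ((B ** Rm Q) *v v)"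
      by (simp add: sym_dot[OF tR] Rcomm[OF c])
    also have "\<dots> = (Rm Q *v v) \<bullet> (B *v (Rm Q *v v))"
      by (simp add: matrix_vector_mul_assoc)
    also have "\<dots> \<ge> 0" using p1 by simp
    finally show ?thesis .
  qed
  ultimately show ?thesis using p2 by (simp add: coneC_def)
qed

lemma cone_P: assumes "B \<in> coneC Q" shows "0 \<le> trace (Pm ** B)"
proof -
  have "trace (Pm ** B) = trace (Pm ** (Pm ** B))" by (simp add: matrix_mul_assoc PP)
  also have "\<dots> = trace ((Pm ** B) ** Pm)" by (rule trace_mul_sym)
  also have "\<dots> \<ge> 0" by (rule trace_sandwich) (use assms tP in \<open>auto simp: coneC_def\<close>)
  finally show ?thesis .
qed

lemma D_cone: "Dm Q \<in> coneC Q"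
proof -
  have "0 \<le> v \<bullet> (Dm Q *v v)" for v
    using Q1[OF Qnn Qrow Qsym, of v]
    by (simp add: Dm_def matrix_vector_mult_diff_rdistrib inner_diff_right)
  moreover have "0 \<le> v \<bullet> ((Rm Q ** Dm Q) *v v)" for v
  proof -
    define a where "a = v \<bullet> v"
    define b where "b = v \<bullet> (Q *v v)"
    define c where "c = (Q *v v) \<bullet> (Q *v v)"
    have ab: "\<bar>b\<bar> \<le> a" using Q1[OF Qnn Qrow Qsym, of v] by (simp add: a_def b_def)
    have ca: "c \<le> a" using Q2[OF Qnn Qrow Qsym, of v] by (simp add: a_def c_def)
    have "v \<bullet> ((Rm Q ** Dm Q) *v v) = ((real CARD('e) - 2) / real CARD('e)) * (a - b)
       + (2 / real CARD('e)) * (b - c)"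
      by (simp add: matrix_vector_mul_assoc[symmetric] R_dot Dm_def matrix_vector_mult_diff_rdistrib
          inner_diff_right a_def b_def c_def inner_commute)
    also have "\<dots> = ((real CARD('e) - 2) * (a - b) + 2 * (b - c)) / real CARD('e)"
      by (simp add: field_simps)
    also have "\<dots> \<ge> 0"
    proof -
      have "(real CARD('e) - 2) * (a - b) \<ge> 2 * (a - b)"
        using N8 ab by (intro mult_right_mono) auto
      then show ?thesis using ab ca by (intro divide_nonneg_pos) auto
    qed
    finally show ?thesis .
  qed
  ultimately show ?thesis using DQ by (simp add: coneC_def)
qed

lemma B_cone: assumes s: "s = 1 \<or> s = -1"
  shows "4 *\<^sub>R mat 1 + s *\<^sub>R (Dm Q ** Q) \<in> coneC Q"
proof -
  let ?B = "4 *\<^sub>R mat 1 + s *\<^sub>R (Dm Q ** Q)"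
  have comm: "?B ** Q = Q ** ?B" by (simp add: malg Dm_def matrix_mul_assoc)
  have Bv: "?B *v v = 4 *\<^sub>R v + s *\<^sub>R ((Q *v v) - Q *v (Q *v v))" for v
    by (simp add: matrix_vector_mult_add_rdistrib mv_scale Dm_def matrix_vector_mult_diff_rdistrib
        matrix_vector_mul_assoc[symmetric])
  have "0 \<le> v \<bullet> (?B *v v) \<and> 0 \<le> v \<bullet> ((Rm Q ** ?B) *v v)" for v
  proof -
    define a where "a = v \<bullet> v"
    define b where "b = v \<bullet> (Q *v v)"
    define c where "c = (Q *v v) \<bullet> (Q *v v)"
    define d where "d = (Q *v v) \<bullet> (Q *v (Q *v v))"
    have ab: "\<bar>b\<bar> \<le> a" using Q1[OF Qnn Qrow Qsym, of v] by (simp add: a_def b_def)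
    have ca: "c \<le> a" using Q2[OF Qnn Qrow Qsym, of v] by (simp add: a_def c_def)
    have dc: "\<bar>d\<bar> \<le> c" using Q1[OF Qnn Qrow Qsym, of "Q *v v"] by (simp add: c_def d_def)
    have c0: "0 \<le> c" by (simp add: c_def)
    have X: "v \<bullet> (?B *v v) = 4 * a + s * (b - c)"
      by (simp add: Bv inner_add_right inner_diff_right a_def b_def c_def sym_dot[OF Qsym])
    have Y: "(Q *v v) \<bullet> (?B *v v) = 4 * b + s * (c - d)"
      by (simp add: Bv inner_add_right inner_diff_right b_def c_def d_def inner_commute)
    have X2: "4 * a + s * (b - c) \<ge> 2 * a" using s ab ca c0 by auto
    have Y2: "4 * b + s * (c - d) \<ge> - 6 * a" using s ab ca dc c0 by auto
    have "v \<bullet> ((Rm Q ** ?B) *v v) = ((real CARD('e) - 2) / real CARD('e)) * (4 * a + s * (b - c))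
       + (2 / real CARD('e)) * (4 * b + s * (c - d))"
      by (simp add: matrix_vector_mul_assoc[symmetric] R_dot X Y del: scaleR_scaleR)
    also have "\<dots> = ((real CARD('e) - 2) * (4 * a + s * (b - c)) + 2 * (4 * b + s * (c - d))) / real CARD('e)"
      by (simp add: field_simps)
    also have "\<dots> \<ge> 0"
    proof -
      have "(real CARD('e) - 2) * (4 * a + s * (b - c)) \<ge> (real CARD('e) - 2) * (2 * a)"
        using N8 X2 by (intro mult_left_mono) auto
      moreover have "(real CARD('e) - 8) * a \<ge> 0" using N8 ab by (intro mult_nonneg_nonneg) auto
      ultimately show ?thesis using Y2 by (intro divide_nonneg_pos) (auto simp: algebra_simps)
    qed
    finally show ?thesis using X X2 ab by auto
  qed
  then show ?thesis using comm by (simp add: coneC_def)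
qed

end





definition Lr :: "('e::finite) rm \<Rightarrow> 'e rm \<Rightarrow> 'e rm" where
  "Lr Q C = ((real CARD('e) - 2) / real CARD('e)) *\<^sub>R C + (1 / real CARD('e)) *\<^sub>R (C ** Q + Q ** C)
     + (2 * trace C / (real CARD('e))^2) *\<^sub>R Dm Q"

fun Zs :: "('e::finite) rm \<Rightarrow> nat \<Rightarrow> 'e rm" where
  "Zs Q 0 = (2 / (real CARD('e))^2) *\<^sub>R Pm"
| "Zs Q (Suc n) = Rm Q ** Zs Q n + ((2 / (real CARD('e))^2) * trace (Dm Q ** Zs Q n)) *\<^sub>R Pm"

definition msum :: "('e::finite) rm \<Rightarrow> real" where "msum C = (\<Sum>i\<in>UNIV. \<Sum>j\<in>UNIV. C$i$j)"

lemma scale2: "(c::real) *\<^sub>R (2 * (X::('e::finite) rm)) = (2 * c) *\<^sub>R X"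
  by (simp add: vec_eq_iff)

lemma Lr_add: "Lr Q (A + B) = Lr Q A + Lr Q B"
  by (simp add: Lr_def malg scaleR_add_right scaleR_add_left distrib_left add_divide_distrib)
lemma Lr_scale: "Lr Q (c *\<^sub>R A) = c *\<^sub>R Lr Q A"
  by (simp add: Lr_def malg algebra_simps)
lemma Lr_sub: "Lr Q (A - B) = Lr Q A - Lr Q B"
  using Lr_add[of Q "A - B" B] by simp
lemma Lrpow_sub: "(Lr Q ^^ n) (A - B) = (Lr Q ^^ n) A - (Lr Q ^^ n) B"
  by (induction n) (simp_all add: Lr_sub)
lemma Lrpow_scale: "(Lr Q ^^ n) (c *\<^sub>R A) = c *\<^sub>R (Lr Q ^^ n) A"
  by (induction n) (simp_all add: Lr_scale)

context
  fixes Q :: "real^'e::finite^'e"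
  assumes Qnn: "\<And>i j. Q$i$j \<ge> 0" and Qrow: "\<And>i. (\<Sum>j\<in>UNIV. Q$i$j) = 1"
    and Qsym: "transpose Q = Q" and N8: "8 < CARD('e)" and tr0: "trace Q = 0"
begin

lemma Npos: "real CARD('e) > 0" using N8 by simp

lemma Lr_J: "Lr Q Jr = Jr + (2 / (real CARD('e))^2) *\<^sub>R Dm Q"
proof -
  have "Lr Q Jr = ((real CARD('e) - 2) / real CARD('e) + 2 / real CARD('e)) *\<^sub>R Jr
     + (2 / (real CARD('e))^2) *\<^sub>R Dm Q"
    by (simp add: Lr_def QJ[OF Qnn Qrow Qsym N8] JQ[OF Qnn Qrow Qsym N8] trJ[OF Qnn Qrow Qsym N8]
        scaleR_add_left scale2)
  also have "(real CARD('e) - 2) / real CARD('e) + 2 / real CARD('e) = 1"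
    using Npos by (simp add: field_simps)
  finally show ?thesis by simp
qed

lemma Lr_DZ: assumes c: "Z ** Q = Q ** Z"
  shows "Lr Q (Dm Q ** Z) = Dm Q ** (Rm Q ** Z + ((2 / (real CARD('e))^2) * trace (Dm Q ** Z)) *\<^sub>R Pm)"
proof -
  let ?N = "real CARD('e)"
  have a1: "(Dm Q ** Z) ** Q = (Q ** Dm Q) ** Z"
    by (metis c DQ[OF Qnn Qrow Qsym N8] matrix_mul_assoc)
  have a2: "Q ** (Dm Q ** Z) = (Q ** Dm Q) ** Z" by (simp add: matrix_mul_assoc)
  have a3: "Dm Q ** (Rm Q ** Z) = ((?N - 2) / ?N) *\<^sub>R (Dm Q ** Z) + (2 / ?N) *\<^sub>R ((Q ** Dm Q) ** Z)"
    by (simp add: Rm_def malg matrix_mul_assoc DQ[OF Qnn Qrow Qsym N8])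
  have a4: "Dm Q ** (c' *\<^sub>R Pm) = c' *\<^sub>R Dm Q" for c'
    by (simp add: malg DP[OF Qnn Qrow Qsym N8])
  have "Lr Q (Dm Q ** Z) = ((?N - 2) / ?N) *\<^sub>R (Dm Q ** Z) + (1 / ?N) *\<^sub>R ((Q ** Dm Q) ** Z + (Q ** Dm Q) ** Z)
     + (2 * trace (Dm Q ** Z) / ?N^2) *\<^sub>R Dm Q"
    by (simp add: Lr_def a1 a2)
  also have "\<dots> = ((?N - 2) / ?N) *\<^sub>R (Dm Q ** Z) + (2 / ?N) *\<^sub>R ((Q ** Dm Q) ** Z)
     + (2 * trace (Dm Q ** Z) / ?N^2) *\<^sub>R Dm Q"
    by (simp add: scale2)
  also have "\<dots> = Dm Q ** (Rm Q ** Z + ((2 / ?N^2) * trace (Dm Q ** Z)) *\<^sub>R Pm)"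
    by (simp add: matrix_add_ldistrib a3 a4)
  finally show ?thesis .
qed

lemma Zs_comm: "Zs Q n ** Q = Q ** Zs Q n"
proof (induction n)
  case 0 then show ?case by (simp add: malg PQ[OF Qnn Qrow Qsym N8])
next
  case (Suc n)
  have "(Rm Q ** Zs Q n) ** Q = Q ** (Rm Q ** Zs Q n)"
    by (metis Suc RQ[OF Qnn Qrow Qsym N8] matrix_mul_assoc)
  then show ?case by (simp add: malg PQ[OF Qnn Qrow Qsym N8])
qed

lemma Y_eq: "(Lr Q ^^ n) ((2 / (real CARD('e))^2) *\<^sub>R Dm Q) = Dm Q ** Zs Q n"
proof (induction n)
  case 0 then show ?case by (simp add: malg DP[OF Qnn Qrow Qsym N8])
next
  case (Suc n)
  then show ?case by (simp add: Lr_DZ[OF Zs_comm])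
qed

lemma Zs_inv: "\<forall>B\<in>coneC Q. 0 \<le> trace (Zs Q n ** B)"
proof (induction n)
  case 0 then show ?case
    using cone_P[OF Qnn Qrow Qsym N8] by (auto simp: malg intro!: mult_nonneg_nonneg)
next
  case (Suc n)
  have c0: "0 \<le> trace (Dm Q ** Zs Q n)"
    using Suc D_cone[OF Qnn Qrow Qsym N8] by (metis trace_mul_sym)
  show ?case
  proof
    fix B assume B: "B \<in> coneC Q"
    have "trace ((Rm Q ** Zs Q n) ** B) = trace (Zs Q n ** (Rm Q ** B))"
    proof -
      have "trace ((Rm Q ** Zs Q n) ** B) = trace (Rm Q ** (Zs Q n ** B))" by (simp add: matrix_mul_assoc)
      also have "\<dots> = trace ((Zs Q n ** B) ** Rm Q)" by (rule trace_mul_sym)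
      also have "\<dots> = trace (Zs Q n ** (B ** Rm Q))" by (simp add: matrix_mul_assoc)
      also have "B ** Rm Q = Rm Q ** B" using B Rcomm[OF Qnn Qrow Qsym N8] by (simp add: coneC_def)
      finally show ?thesis .
    qed
    moreover have "0 \<le> trace (Zs Q n ** (Rm Q ** B))" using Suc cone_R[OF Qnn Qrow Qsym N8 B] by blast
    moreover have "0 \<le> trace (Pm ** B)" using cone_P[OF Qnn Qrow Qsym N8 B] .
    ultimately show "0 \<le> trace (Zs Q (Suc n) ** B)"
      using c0 by (simp add: malg)
  qed
qed

lemma trace_Zs_step: "trace (Zs Q (Suc n)) \<le> trace (Zs Q n)"
proof -
  let ?N = "real CARD('e)"
  define t where "t = trace (Zs Q n)"
  define q where "q = trace (Q ** Zs Q n)"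
  have "0 \<le> trace (Zs Q n ** Dm Q)" using Zs_inv[of n] D_cone[OF Qnn Qrow Qsym N8] by blast
  then have "0 \<le> trace (Dm Q ** Zs Q n)" by (metis trace_mul_sym)
  then have c0: "0 \<le> t - q"
    by (simp add: Dm_def malg t_def q_def)
  have "trace (Zs Q (Suc n)) = ((?N - 2) / ?N) * t + (2 / ?N) * q + (2 / ?N^2) * (t - q) * (?N - 1)"
    by (simp add: malg Rm_def Dm_def trP[OF Qnn Qrow Qsym N8] t_def q_def)
  also have "\<dots> = t - (2 / ?N^2) * (t - q)"
    using Npos by (simp add: field_simps power2_eq_square)
  also have "\<dots> \<le> t" using c0 by simp
  finally show ?thesis by (simp add: t_def)
qed

lemma trace_Zs: "trace (Zs Q n) \<le> 2 / real CARD('e)"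
proof -
  have "trace (Zs Q n) \<le> trace (Zs Q 0)"
  proof (induction n)
    case (Suc n) then show ?case using trace_Zs_step[of n] by linarith
  qed simp
  also have "\<dots> = 2 / (real CARD('e))^2 * (real CARD('e) - 1)"
    by (simp add: trace_scale trP[OF Qnn Qrow Qsym N8])
  also have "\<dots> \<le> 2 / real CARD('e)"
    using Npos by (simp add: field_simps power2_eq_square)
  finally show ?thesis .
qed

lemma delta_bound: "\<bar>trace ((Dm Q ** Zs Q n) ** Q)\<bar> \<le> 8 / real CARD('e)"
proof -
  have eq: "trace ((Dm Q ** Zs Q n) ** Q) = trace (Zs Q n ** (Dm Q ** Q))"
  proof -
    have "trace ((Dm Q ** Zs Q n) ** Q) = trace (Dm Q ** (Zs Q n ** Q))" by (simp add: matrix_mul_assoc)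
    also have "\<dots> = trace ((Zs Q n ** Q) ** Dm Q)" by (rule trace_mul_sym)
    also have "\<dots> = trace (Zs Q n ** (Q ** Dm Q))" by (simp add: matrix_mul_assoc)
    also have "Q ** Dm Q = Dm Q ** Q" using DQ[OF Qnn Qrow Qsym N8] by simp
    finally show ?thesis .
  qed
  have p: "0 \<le> trace (Zs Q n ** (4 *\<^sub>R mat 1 + 1 *\<^sub>R (Dm Q ** Q)))"
    using Zs_inv[of n] B_cone[OF Qnn Qrow Qsym N8, of 1] by blast
  have m: "0 \<le> trace (Zs Q n ** (4 *\<^sub>R mat 1 + (-1) *\<^sub>R (Dm Q ** Q)))"
    using Zs_inv[of n] B_cone[OF Qnn Qrow Qsym N8, of "-1"] by blast
  have "\<bar>trace (Zs Q n ** (Dm Q ** Q))\<bar> \<le> 4 * trace (Zs Q n)"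
    using p m by (simp add: malg)
  also have "\<dots> \<le> 8 / real CARD('e)" using trace_Zs[of n] by simp
  finally show ?thesis using eq by simp
qed

definition gq :: "nat \<Rightarrow> real" where "gq n = trace ((Lr Q ^^ n) Jr ** Q)"

lemma g_step: "gq (Suc n) - gq n = trace ((Dm Q ** Zs Q n) ** Q)"
proof -
  have "(Lr Q ^^ Suc n) Jr - (Lr Q ^^ n) Jr = (Lr Q ^^ n) (Lr Q Jr - Jr)"
    by (simp add: funpow_Suc_right Lrpow_sub del: funpow.simps)
  also have "\<dots> = Dm Q ** Zs Q n" by (simp add: Lr_J Y_eq)
  finally have "(Lr Q ^^ Suc n) Jr = (Lr Q ^^ n) Jr + Dm Q ** Zs Q n" by (simp add: algebra_simps)
  then show ?thesis by (simp add: gq_def malg del: funpow.simps)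
qed

lemma g_bound: "\<bar>gq n\<bar> \<le> 1 + 8 * real n / real CARD('e)"
proof (induction n)
  case 0 then show ?case by (simp add: gq_def JQ[OF Qnn Qrow Qsym N8] trJ[OF Qnn Qrow Qsym N8])
next
  case (Suc n)
  have "\<bar>gq (Suc n)\<bar> \<le> \<bar>gq n\<bar> + \<bar>gq (Suc n) - gq n\<bar>" by linarith
  also have "\<dots> \<le> 1 + 8 * real n / real CARD('e) + 8 / real CARD('e)"
    using Suc delta_bound[of n] g_step[of n] by simp
  finally show ?case by (simp add: field_simps)
qed

lemma tr_step: "trace (Lr Q C) = trace C + (2 / real CARD('e)) * trace (C ** Q)"
proof -
  let ?N = "real CARD('e)"
  have "trace (Lr Q C) = ((?N - 2) / ?N) * trace C + (1 / ?N) * (trace (C ** Q) + trace (C ** Q))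
     + (2 * trace C / ?N^2) * ?N"
    by (simp add: Lr_def trace_add trace_scale Dm_def trace_sub trace_I tr0 trace_mul_sym[of Q C])
  also have "\<dots> = trace C + (2 / ?N) * trace (C ** Q)"
    using Npos by (simp add: field_simps power2_eq_square)
  finally show ?thesis .
qed

lemma msum_add: "msum (A + B) = msum A + msum B" by (simp add: msum_def sum.distrib)
lemma msum_scale: "msum (c *\<^sub>R A) = c * msum A" by (simp add: msum_def sum_distrib_left)
lemma msum_sub: "msum (A - B) = msum A - msum B" by (simp add: msum_def sum_subtractf)
lemma msum_CQ: "msum (C ** Q) = msum C"
proof -
  have "msum (C ** Q) = (\<Sum>i\<in>UNIV. \<Sum>j\<in>UNIV. \<Sum>k\<in>UNIV. C$i$k * Q$k$j)"
    by (simp add: msum_def matrix_matrix_mult_def)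
  also have "\<dots> = (\<Sum>i\<in>UNIV. \<Sum>k\<in>UNIV. \<Sum>j\<in>UNIV. C$i$k * Q$k$j)"
    by (rule sum.cong[OF refl], rule sum.swap)
  also have "\<dots> = (\<Sum>i\<in>UNIV. \<Sum>k\<in>UNIV. C$i$k * (\<Sum>j\<in>UNIV. Q$k$j))"
    by (simp only: sum_distrib_left)
  also have "\<dots> = msum C" by (simp add: msum_def Qrow)
  finally show ?thesis .
qed
lemma msum_QC: "msum (Q ** C) = msum C"
proof -
  have "msum (Q ** C) = (\<Sum>i\<in>UNIV. \<Sum>j\<in>UNIV. \<Sum>k\<in>UNIV. Q$i$k * C$k$j)"
    by (simp add: msum_def matrix_matrix_mult_def)
  also have "\<dots> = (\<Sum>i\<in>UNIV. \<Sum>k\<in>UNIV. \<Sum>j\<in>UNIV. Q$i$k * C$k$j)"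
    by (rule sum.cong[OF refl], rule sum.swap)
  also have "\<dots> = (\<Sum>i\<in>UNIV. \<Sum>k\<in>UNIV. Q$i$k * (\<Sum>j\<in>UNIV. C$k$j))"
    by (simp only: sum_distrib_left)
  also have "\<dots> = (\<Sum>k\<in>UNIV. \<Sum>i\<in>UNIV. Q$i$k * (\<Sum>j\<in>UNIV. C$k$j))"
    by (rule sum.swap)
  also have "\<dots> = (\<Sum>k\<in>UNIV. (\<Sum>i\<in>UNIV. Q$i$k) * (\<Sum>j\<in>UNIV. C$k$j))"
    by (simp only: sum_distrib_right)
  also have "\<dots> = msum C" by (simp add: msum_def Qcol[OF Qnn Qrow Qsym])
  finally show ?thesis .
qed
lemma msum_D: "msum (Dm Q) = 0"
proof -
  have "msum (mat 1 :: 'e rm) = real CARD('e)" by (simp add: msum_def mat_def)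
  moreover have "msum Q = real CARD('e)" by (simp add: msum_def Qrow)
  ultimately show ?thesis by (simp add: Dm_def msum_sub)
qed
lemma msum_Lr: "msum (Lr Q C) = msum C"
proof -
  let ?N = "real CARD('e)"
  have "msum (Lr Q C) = ((?N - 2) / ?N) * msum C + (1 / ?N) * (msum C + msum C)"
    by (simp add: Lr_def msum_add msum_scale msum_CQ msum_QC msum_D)
  also have "\<dots> = msum C" using Npos by (simp add: field_simps)
  finally show ?thesis .
qed

end




definition cm :: "('e::finite) rm \<Rightarrow> 'e cmat" where "cm M = (\<lambda>x y. complex_of_real (M$x$y))"

lemma mmult_cm: "mmult (cm A) (cm B) = cm (A ** B)"
  by (simp add: fun_eq_iff mmult_def cm_def matrix_matrix_mult_def)

lemma mtrace_cm: "mtrace (cm A) = complex_of_real (trace A)"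
  by (simp add: mtrace_def cm_def trace_def)

lemma cQ_cm: "cQ Q = cm (\<chi> i j. Q i j)"
  by (simp add: fun_eq_iff cQ_def cm_def)

lemma idm_cm: "idm = cm (mat 1)"
  by (simp add: fun_eq_iff idm_def cm_def mat_def)

lemma Jm_cm: "(Jm :: 'e::finite cmat) = cm Jr"
  by (simp add: fun_eq_iff Jm_def cm_def Jr_def)

lemma L0_cm: "L0 Q (cm M) = cm (Lr (\<chi> i j. Q i j) M)"
  unfolding L0_def Let_def cQ_cm idm_cm mmult_cm mtrace_cm
  by (simp add: fun_eq_iff cm_def Lr_def Dm_def field_simps)

lemma L0pow_cm: "(L0 Q ^^ n) Jm = cm ((Lr (\<chi> i j. Q i j) ^^ n) Jr)"
  by (induction n) (simp_all add: Jm_cm L0_cm)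


lemma weight_lemma:
  fixes u :: real and x y :: "'e::finite"
  shows "(\<Sum>B\<in>Pow (UNIV::'e set). u ^ card B * (1 - u) ^ (CARD('e) - card B) *
      ((if x \<in> B then 1 else 0) * (if y \<in> B then 1 else 0))) = (if x = y then u else u^2)"
proof -
  define f2 where "f2 i = (if i \<in> {x, y} then 0 else 1 - u)" for i
  have "(\<Prod>i\<in>(UNIV::'e set). u + f2 i) = (\<Prod>i\<in>(UNIV::'e set). if i \<in> {x,y} then u else 1)"
    by (rule prod.cong) (auto simp: f2_def)
  also have "\<dots> = u ^ card {x, y}"
  proof -
    have e: "{i. i = x \<or> i = y} = {x, y}" by auto
    show ?thesis by (simp add: prod.If_cases Int_absorb1 e)
  qed
  also have "\<dots> = (if x = y then u else u^2)" by (auto simp: power2_eq_square)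
  finally have lhs: "(\<Prod>i\<in>(UNIV::'e set). u + f2 i) = (if x = y then u else u^2)" .
  have "(\<Prod>i\<in>(UNIV::'e set). u + f2 i) = (\<Sum>X\<in>Pow UNIV. (\<Prod>i\<in>X. u) * (\<Prod>i\<in>UNIV - X. f2 i))"
    by (rule prod_add) simp
  also have "\<dots> = (\<Sum>B\<in>Pow (UNIV::'e set). u ^ card B * (1 - u) ^ (CARD('e) - card B) *
      ((if x \<in> B then 1 else 0) * (if y \<in> B then 1 else 0)))"
  proof (rule sum.cong[OF refl])
    fix B :: "'e set" assume "B \<in> Pow UNIV"
    show "(\<Prod>i\<in>B. u) * (\<Prod>i\<in>UNIV - B. f2 i) = u ^ card B * (1 - u) ^ (CARD('e) - card B) *
      ((if x \<in> B then 1 else 0) * (if y \<in> B then 1 else 0))"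
    proof (cases "x \<in> B \<and> y \<in> B")
      case True
      then have "(\<Prod>i\<in>UNIV - B. f2 i) = (\<Prod>i\<in>UNIV - B. 1 - u)"
        by (intro prod.cong) (auto simp: f2_def)
      also have "\<dots> = (1 - u) ^ (CARD('e) - card B)"
        by (simp add: card_Diff_subset)
      finally show ?thesis using True by simp
    next
      case False
      then obtain i where "i \<in> UNIV - B" "i \<in> {x, y}" by auto
      then have "(\<Prod>i\<in>UNIV - B. f2 i) = 0"
        by (intro prod_zero) (auto simp: f2_def)
      then show ?thesis using False by auto
    qed
  qed
  finally show ?thesis using lhs by simp
qed

lemma S_beta_cm: fixes M :: "('e::finite) rm" shows "S_beta u (cm M) = complex_of_real (u^2 * msum M + (u - u^2) * trace M)"
proof -
  let ?w = "\<lambda>B::'e set. u ^ card B * (1 - u) ^ (CARD('e) - card B)"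
  let ?I = "\<lambda>x B. (if x \<in> B then 1 else 0) :: real"
  have "S_beta u (cm M) = complex_of_real (\<Sum>B\<in>Pow (UNIV::'e set). ?w B *
      (\<Sum>x\<in>UNIV. \<Sum>y\<in>UNIV. ?I x B * M$x$y * ?I y B))"
  proof -
    have h: "(if x \<in> B then 1 else 0) * complex_of_real r * (if y \<in> B then 1 else 0)
       = complex_of_real (?I x B * r * ?I y B)" for x y B r by simp
    show ?thesis unfolding S_beta_def cm_def h
      by (simp only: of_real_sum[symmetric] of_real_mult[symmetric])
  qed
  also have "(\<Sum>B\<in>Pow (UNIV::'e set). ?w B * (\<Sum>x\<in>UNIV. \<Sum>y\<in>UNIV. ?I x B * M$x$y * ?I y B))
      = (\<Sum>x\<in>UNIV. \<Sum>y\<in>UNIV. M$x$y * (\<Sum>B\<in>Pow (UNIV::'e set). ?w B * (?I x B * ?I y B)))"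
  proof -
    have "(\<Sum>B\<in>Pow (UNIV::'e set). ?w B * (\<Sum>x\<in>UNIV. \<Sum>y\<in>UNIV. ?I x B * M$x$y * ?I y B))
       = (\<Sum>B\<in>Pow (UNIV::'e set). \<Sum>x\<in>UNIV. \<Sum>y\<in>UNIV. M$x$y * (?w B * (?I x B * ?I y B)))"
      by (simp add: sum_distrib_left mult_ac)
    also have "\<dots> = (\<Sum>x\<in>UNIV. \<Sum>B\<in>Pow (UNIV::'e set). \<Sum>y\<in>UNIV. M$x$y * (?w B * (?I x B * ?I y B)))"
      by (rule sum.swap)
    also have "\<dots> = (\<Sum>x\<in>UNIV. \<Sum>y\<in>UNIV. \<Sum>B\<in>Pow (UNIV::'e set). M$x$y * (?w B * (?I x B * ?I y B)))"
      by (rule sum.cong[OF refl], rule sum.swap)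
    also have "\<dots> = (\<Sum>x\<in>UNIV. \<Sum>y\<in>UNIV. M$x$y * (\<Sum>B\<in>Pow (UNIV::'e set). ?w B * (?I x B * ?I y B)))"
      by (simp only: sum_distrib_left)
    finally show ?thesis .
  qed
  also have "\<dots> = (\<Sum>x\<in>UNIV. \<Sum>y\<in>UNIV. M$x$y * (if x = y then u else u^2))"
    by (simp only: weight_lemma)
  also have "\<dots> = (\<Sum>x\<in>UNIV. u^2 * (\<Sum>y\<in>UNIV. M$x$y) + (u - u^2) * M$x$x)"
  proof (rule sum.cong[OF refl])
    fix x :: 'e
    have "(\<Sum>y\<in>UNIV. M$x$y * (if x = y then u else u^2)) =
        (\<Sum>y\<in>UNIV. u^2 * M$x$y + (if x = y then (u - u^2) * M$x$y else 0))"
      by (rule sum.cong) (auto simp: algebra_simps)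
    also have "\<dots> = u^2 * (\<Sum>y\<in>UNIV. M$x$y) + (u - u^2) * M$x$x"
      by (simp add: sum.distrib sum_distrib_left)
    finally show "(\<Sum>y\<in>UNIV. M$x$y * (if x = y then u else u^2)) = u^2 * (\<Sum>y\<in>UNIV. M$x$y) + (u - u^2) * M$x$x" .
  qed
  also have "\<dots> = u^2 * msum M + (u - u^2) * trace M"
    by (simp add: sum.distrib sum_distrib_left msum_def trace_def)
  finally show ?thesis .
qed




lemma C_eps_ge: assumes "0 < e" shows "8 / e \<le> C_eps e"
proof -
  define X where "X = 32 * sqrt 2 / sqrt (1 - cos 1)"
  have X0: "X \<ge> 0" by (simp add: X_def)
  define A where "A = 2 / e + 9 + pi + X"
  have "2 / e \<ge> 0" using assms by simp
  then have A: "A \<ge> 2 * pi" unfolding A_def using X0 pi_less_4 by linarith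
  have "A / pi \<ge> 2" using A pi_gt_zero by (simp add: field_simps)
  moreover have "(4 + e) / e \<ge> 4 / e" using assms by (simp add: divide_right_mono)
  moreover have "4 / e \<ge> 0" using assms by simp
  ultimately have "A / pi * ((4 + e) / e) \<ge> 2 * (4 / e)"
    by (intro mult_mono) auto
  then show ?thesis by (simp add: C_eps_def A_def X_def)
qed

lemma bern: assumes "0 < e" "e \<le> 1" "N > 8"
  shows "1 + 8 * real n / N \<le> (8 / e) * (1 / (1 - e / N)) ^ n"
proof -
  have s0: "0 < 1 - e / N" using assms by (simp add: field_simps)
  have "0 \<le> e / N" using assms by simp
  then have "1 + real n * (e / N) \<le> (1 + e / N) ^ n"
    by (intro Bernoulli_inequality) linarith
  also have "\<dots> \<le> (1 / (1 - e / N)) ^ n"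
  proof (rule power_mono)
    have "(1 + e / N) * (1 - e / N) \<le> 1" by (simp add: algebra_simps)
    then show "1 + e / N \<le> 1 / (1 - e / N)" using s0 by (simp add: field_simps)
  qed (use assms in simp)
  finally have b: "1 + real n * (e / N) \<le> (1 / (1 - e / N)) ^ n" .
  have "1 + 8 * real n / N = (8 / e) * (e / 8 + real n * (e / N))"
    using assms by (simp add: field_simps)
  also have "\<dots> \<le> (8 / e) * (1 + real n * (e / N))"
    using assms by (intro mult_left_mono) auto
  also have "\<dots> \<le> (8 / e) * (1 / (1 - e / N)) ^ n"
    using assms b by (intro mult_left_mono) auto
  finally show ?thesis .
qed


theorem lemma4p6:
  fixes Q :: "'e::finite \<Rightarrow> 'e \<Rightarrow> real"
    and \<epsilon> lam u :: real and m :: nat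
  assumes N_gt: "CARD('e) > 8"
    and Q_stoch: "stochastic Q"
    and Q_irr: "irreducible_mat Q"
    and Q_sym: "\<forall>x y. Q x y = Q y x"
    and Q_tr: "mtrace Q = 0"
    and eps: "0 < \<epsilon>" "\<epsilon> \<le> 1"
    and lam: "\<epsilon> < lam"
    and lamN: "(lam - \<epsilon>) * real CARD('e) > lam * \<epsilon>"
    and u: "0 < u" "u < 1"
  shows "(let N = real CARD('e) in
     norm (complex_of_real (lam * N^2 / (2 * u * (1 - u) * (N + lam))) *
       (\<Sum>k. (let n = k + m * CARD('e) + 1 in
           complex_of_real ((N / (N + lam)) ^ n) *
           (S_beta u ((L0 Q ^^ (n + 1)) Jm) / complex_of_real N
            - S_beta u ((L0 Q ^^ n) Jm) / complex_of_real N))))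
     \<le> inverse (((1 + lam / N) * (1 - \<epsilon> / N)) ^ (m * CARD('e) + 1))
        * (C_eps \<epsilon> * lam * (N - \<epsilon>) / ((lam - \<epsilon>) * N - lam * \<epsilon>)))"
proof -
  define Qm :: "'e rm" where "Qm = (\<chi> i j. Q i j)"
  have Qnn: "\<And>i j. Qm$i$j \<ge> 0" using Q_stoch by (simp add: Qm_def stochastic_def)
  have Qrow: "\<And>i. (\<Sum>j\<in>UNIV. Qm$i$j) = 1" using Q_stoch by (simp add: Qm_def stochastic_def)
  have Qsym: "transpose Qm = Qm" using Q_sym by (simp add: Qm_def transpose_def vec_eq_iff)
  have tr0: "trace Qm = 0" using Q_tr by (simp add: Qm_def trace_def mtrace_def)
  note ctx = Qnn Qrow Qsym N_gt tr0
  define N where "N = real CARD('e)"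
  have N8: "N > 8" using N_gt by (simp add: N_def)
  define Cn where "Cn n = (Lr Qm ^^ n) Jr" for n
  define g where "g n = gq Qm n" for n
  have msumC: "msum (Cn n) = msum (Jr :: 'e rm)" for n
    by (induction n) (simp_all add: Cn_def msum_Lr[OF ctx])
  have trC: "trace (Cn (Suc n)) = trace (Cn n) + (2 / N) * g n" for n
    by (simp add: Cn_def g_def gq_def[OF ctx] tr_step[OF ctx] N_def)
  have L0C: "(L0 Q ^^ n) Jm = cm (Cn n)" for n by (simp add: L0pow_cm Cn_def Qm_def)
  have Sdiff: "S_beta u ((L0 Q ^^ (n + 1)) Jm) / complex_of_real N - S_beta u ((L0 Q ^^ n) Jm) / complex_of_real N
     = complex_of_real (2 * u * (1 - u) * g n / N^2)" for n
  proof -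
    have "S_beta u ((L0 Q ^^ (n + 1)) Jm) / complex_of_real N - S_beta u ((L0 Q ^^ n) Jm) / complex_of_real N
      = complex_of_real ((u^2 * msum (Jr :: 'e rm) + (u - u^2) * trace (Cn (Suc n))) / N
          - (u^2 * msum (Jr :: 'e rm) + (u - u^2) * trace (Cn n)) / N)"
    proof -
      have h: "(L0 Q ^^ (n + 1)) Jm = cm (Cn (Suc n))" using L0C[of "Suc n"] by simp
      show ?thesis unfolding h L0C S_beta_cm msumC by simp
    qed
    also have "(u^2 * msum (Jr :: 'e rm) + (u - u^2) * trace (Cn (Suc n))) / N
          - (u^2 * msum (Jr :: 'e rm) + (u - u^2) * trace (Cn n)) / N = 2 * u * (1 - u) * g n / N^2"
      using N8 by (simp add: trC field_simps power2_eq_square)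
    finally show ?thesis .
  qed
  define \<rho> where "\<rho> = N / (N + lam)"
  define s where "s = 1 - \<epsilon> / N"
  define r where "r = (1 + lam / N) * s"
  define n0 where "n0 = m * CARD('e) + 1"
  define t where "t k = \<rho> ^ (k + n0) * (2 * u * (1 - u) * g (k + n0) / N^2)" for k
  define T where "T = (\<lambda>k. (let n = k + m * CARD('e) + 1 in
           complex_of_real ((N / (N + lam)) ^ n) *
           (S_beta u ((L0 Q ^^ (n + 1)) Jm) / complex_of_real N
            - S_beta u ((L0 Q ^^ n) Jm) / complex_of_real N)))"
  have T: "T k = complex_of_real (t k)" for k
    unfolding T_def Let_def Sdiff of_real_mult[symmetric] t_def \<rho>_def n0_def by simp
  define K where "K = 2 * u * (1 - u) / N^2 * (8 / \<epsilon>)"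
  have Npos: "N > 0" using N8 by simp
  have s0: "s > 0" using N8 eps by (simp add: s_def field_simps)
  have rho0: "\<rho> > 0" using Npos lam eps by (simp add: \<rho>_def)
  have uu: "u * (1 - u) > 0" using u by simp
  have Dpos: "(lam - \<epsilon>) * N - lam * \<epsilon> > 0" using lamN by (simp add: N_def)
  have r1: "r > 1"
  proof -
    have "r = 1 + ((lam - \<epsilon>) * N - lam * \<epsilon>) / N^2"
      using Npos by (simp add: r_def s_def field_simps power2_eq_square)
    then show ?thesis using Dpos Npos by simp
  qed
  have ratio: "\<rho> * (1 / s) = 1 / r"
    using Npos s0 lam eps by (simp add: \<rho>_def r_def field_simps)
  have tb: "norm (T k) \<le> K * (1 / r) ^ (k + n0)" for k
  proof -
    have "norm (T k) = \<bar>t k\<bar>" unfolding T by (rule norm_of_real)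
    also have "\<dots> = \<rho> ^ (k + n0) * (2 * u * (1 - u) / N^2) * \<bar>g (k + n0)\<bar>"
      using rho0 u by (simp add: t_def abs_mult)
    also have "\<dots> \<le> \<rho> ^ (k + n0) * (2 * u * (1 - u) / N^2) * ((8 / \<epsilon>) * (1 / s) ^ (k + n0))"
    proof (rule mult_left_mono)
      have "\<bar>g (k + n0)\<bar> \<le> 1 + 8 * real (k + n0) / N"
        using g_bound[OF ctx, of "k + n0"] by (simp add: g_def N_def)
      also have "\<dots> \<le> (8 / \<epsilon>) * (1 / s) ^ (k + n0)"
        unfolding s_def by (rule bern) (use eps N8 in auto)
      finally show "\<bar>g (k + n0)\<bar> \<le> (8 / \<epsilon>) * (1 / s) ^ (k + n0)" .
    qed (use rho0 uu in simp)
    also have "\<dots> = K * (\<rho> * (1 / s)) ^ (k + n0)"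
      by (simp add: K_def power_mult_distrib[symmetric])
    also have "\<rho> * (1 / s) = 1 / r" by (rule ratio)
    finally show ?thesis .
  qed
  have geo: "(\<lambda>k. K * (1 / r) ^ (k + n0)) = (\<lambda>k. (K * (1 / r) ^ n0) * (1 / r) ^ k)"
    by (simp add: power_add mult_ac)
  have r0: "norm (1 / r) < 1" using r1 by simp
  have sumK: "summable (\<lambda>k. K * (1 / r) ^ (k + n0))"
    unfolding geo by (intro summable_mult summable_geometric r0)
  have sumT: "summable (\<lambda>k. norm (T k))"
    by (rule summable_comparison_test[OF _ sumK]) (use tb in auto)
  have "norm (suminf T) \<le> (\<Sum>k. norm (T k))" by (rule summable_norm[OF sumT])
  also have "\<dots> \<le> (\<Sum>k. K * (1 / r) ^ (k + n0))" by (rule suminf_le[OF tb sumT sumK])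
  also have "\<dots> = K * (1 / r) ^ n0 * (1 / (1 - 1 / r))"
    unfolding geo suminf_mult[OF summable_geometric[OF r0]] suminf_geometric[OF r0] by simp
  finally have nT: "norm (suminf T) \<le> K * (1 / r) ^ n0 * (1 / (1 - 1 / r))" .
  define P where "P = lam * N^2 / (2 * u * (1 - u) * (N + lam))"
  have P0: "P > 0" using uu Npos lam eps by (simp add: P_def)
  have e1: "P * K = 8 * lam / (\<epsilon> * (N + lam))"
  proof -
    have gen0: "lam * N^2 / (2 * w * M) * (2 * w / N^2 * (8 / \<epsilon>)) = 8 * lam / (\<epsilon> * M)"
      if "w \<noteq> 0" "M \<noteq> 0" for w M
      using that Npos eps by (simp add: field_simps power2_eq_square)
    have gen: "lam * N^2 / (2 * w * (N + lam)) * (2 * w / N^2 * (8 / \<epsilon>)) = 8 * lam / (\<epsilon> * (N + lam))"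
      if "w \<noteq> 0" for w
      using gen0[of w "N + lam"] that Npos lam eps by simp
    have P': "P = lam * N^2 / (2 * (u * (1 - u)) * (N + lam))" unfolding P_def by (simp add: mult.assoc)
    have K': "K = 2 * (u * (1 - u)) / N^2 * (8 / \<epsilon>)" unfolding K_def by (simp add: mult.assoc)
    show ?thesis unfolding P' K' by (rule gen) (use u in simp)
  qed
  have e2: "1 / (1 - 1 / r) = (N + lam) * (N - \<epsilon>) / ((lam - \<epsilon>) * N - lam * \<epsilon>)"
  proof -
    have rr: "r = (N + lam) * (N - \<epsilon>) / N^2" unfolding r_def s_def using Npos
      by (simp add: field_simps power2_eq_square)
    have rm1: "r - 1 = ((lam - \<epsilon>) * N - lam * \<epsilon>) / N^2" unfolding rr using Npos
      by (simp add: field_simps power2_eq_square)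
    have "1 / (1 - 1 / r) = r / (r - 1)" using r1 by (simp add: field_simps)
    also have "\<dots> = ((N + lam) * (N - \<epsilon>) / N^2) / (((lam - \<epsilon>) * N - lam * \<epsilon>) / N^2)"
      using rm1 rr by simp
    also have "\<dots> = (N + lam) * (N - \<epsilon>) / ((lam - \<epsilon>) * N - lam * \<epsilon>)"
      using Npos by simp
    finally show ?thesis .
  qed
  have "norm (complex_of_real P * suminf T) = P * norm (suminf T)" using P0 by (simp add: norm_mult)
  also have "\<dots> \<le> P * (K * (1 / r) ^ n0 * (1 / (1 - 1 / r)))" using mult_left_mono[OF nT, of P] P0 by simp
  also have "\<dots> = inverse (r ^ n0) * ((8 / \<epsilon>) * (lam * (N - \<epsilon>) / ((lam - \<epsilon>) * N - lam * \<epsilon>)))"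
  proof -
    have "P * (K * (1 / r) ^ n0 * (1 / (1 - 1 / r))) = inverse (r ^ n0) * ((P * K) * (1 / (1 - 1 / r)))"
    proof -
      have ip: "(1 / r) ^ n0 = inverse (r ^ n0)" by (simp add: power_one_over inverse_eq_divide)
      show ?thesis unfolding ip by (simp only: mult_ac)
    qed
    also have "\<dots> = inverse (r ^ n0) * ((8 / \<epsilon>) * (lam * (N - \<epsilon>) / ((lam - \<epsilon>) * N - lam * \<epsilon>)))"
    proof -
      have gen: "(8 * lam / (\<epsilon> * M)) * (M * X / Dd) = (8 / \<epsilon>) * (lam * X / Dd)"
        if "M \<noteq> 0" for M X Dd using that eps by (simp add: field_simps)
      have "N + lam \<noteq> 0" using Npos lam eps by simp
      then show ?thesis unfolding e1 e2 using gen[of "N + lam" "N - \<epsilon>" "(lam - \<epsilon>) * N - lam * \<epsilon>"]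
        by simp
    qed
    finally show ?thesis .
  qed
  also have "\<dots> \<le> inverse (r ^ n0) * (C_eps \<epsilon> * (lam * (N - \<epsilon>) / ((lam - \<epsilon>) * N - lam * \<epsilon>)))"
  proof (rule mult_left_mono[OF mult_right_mono])
    show "8 / \<epsilon> \<le> C_eps \<epsilon>" using C_eps_ge eps by simp
    have "N - \<epsilon> > 0" using N8 eps by simp
    then show "0 \<le> lam * (N - \<epsilon>) / ((lam - \<epsilon>) * N - lam * \<epsilon>)" using Dpos lam eps by simp
    show "0 \<le> inverse (r ^ n0)" using r1 by simp
  qed
  finally have main: "norm (complex_of_real P * suminf T)
     \<le> inverse (r ^ n0) * (C_eps \<epsilon> * (lam * (N - \<epsilon>) / ((lam - \<epsilon>) * N - lam * \<epsilon>)))" .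
  show ?thesis using main
    by (simp only: Let_def T_def P_def N_def r_def s_def n0_def mult.assoc times_divide_eq_right)
qed


end
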